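(* Assume the setting of the model $Y_i = Z_i^T \pi^* + D_i \beta^* + \epsilon_i$, $E(\epsilon_i \mid Z_i)=0$, with $B^* = \{j : \pi^*_j \ne 0\}$, an integer $U$ with $1 \le U \le L-1$ (so that every $B$ with $c(B)=U-1$ has $c(B^C) \ge 2$), and $c(B^* ) < U$. Let $\alpha_1, \alpha_2 \in (0,1)$ with $\alpha = \alpha_1 + \alpha_2 < 1$. For every $\beta_0$ and $B \subseteq \{1,\ldots,L\}$ let $T(\beta_0,B)$ be a test statistic with critical value $q^T_{1-\alpha_2}(B)$ such that whenever $B^* \subseteq B$ and $\beta^*=\beta_0$, $\mathrm{pr}\{T(\beta_0,B) > q^T_{1-\alpha_2}(B)\} \le \alpha_2$, and let $C_{1-\alpha_2}(Y,D,Z,B) = \{\beta_0 : T(\beta_0,B) \le q^T_{1-\alpha_2}(B)\}$. For every $B$ with $c(B^C) \ge 2$ let $S(B)$ be a pretest statistic for the null hypothesis $\pi^*_{B^C} = 0$ with critical value $q^S_{1-\alpha_1}(B)$ such that whenever $\pi^*_{B^C} = 0$ (equivalently $B^* \subseteq B$), $\mathrm{pr}\{S(B) > q^S_{1-\alpha_1}(B)\} \le \alpha_1$. Define \[ C'_{1-\alpha}(Y,D,Z) = \bigcup \big\{ C_{1-\alpha_2}(Y,D,Z,B) : B \subseteq \{1,\ldots,L\},\ c(B) = U-1,\ S(B) \le q^S_{1-\alpha_1}(B) \big\}. \] Then $\mathrm{pr}\{\beta^* \in C'_{1-\alpha}(Y,D,Z)\} \ge 1-\alpha$.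
   Context: $Y=(Y_1,\ldots,Y_n)$, $D=(D_1,\ldots,D_n)$, $Z$ is the $n\times L$ matrix with rows $Z_i^T$, and $\pi^*\in\mathbb{R}^L$, $\beta^*\in\mathbb{R}$ are unknown. For $A \subseteq \{1,\ldots,L\}$, $c(A)$ is its cardinality, $A^C$ its complement, and for a vector $\pi \in \mathbb{R}^L$, $\pi_A$ is the subvector of entries indexed by $A$. *)

theory Defs
  imports "HOL-Probability.Probability"
begin

text \<open>Data: Y, D are indexed by i in {1..n}; Z is indexed by i in {1..n}, j in {1..L}.\<close>
type_synonym data = "(nat \<Rightarrow> real) \<times> (nat \<Rightarrow> real) \<times> (nat \<Rightarrow> nat \<Rightarrow> real)"

definition supp_pi :: "nat \<Rightarrow> (nat \<Rightarrow> real) \<Rightarrow> nat set" where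
  "supp_pi L \<pi> = {j \<in> {1..L}. \<pi> j \<noteq> 0}"

text \<open>E(eps_i | Z_i) = 0, by the defining property of conditional expectation:
  eps_i integrable and its integral over every event generated by Z_i vanishes.\<close>
definition cond_mean_zero :: "'a measure \<Rightarrow> nat \<Rightarrow> ('a \<Rightarrow> real) \<Rightarrow> ('a \<Rightarrow> nat \<Rightarrow> real) \<Rightarrow> bool" where
  "cond_mean_zero M L e Zi \<longleftrightarrow>
     integrable M e \<and>
     (\<lambda>\<omega>. restrict (Zi \<omega>) {1..L}) \<in> M \<rightarrow>\<^sub>M (\<Pi>\<^sub>M j\<in>{1..L}. borel) \<and>
     (\<forall>A \<in> sets (\<Pi>\<^sub>M j\<in>{1..L}. (borel :: real measure)).
        (\<integral>\<omega>. indicator A (restrict (Zi \<omega>) {1..L}) * e \<omega> \<partial>M) = 0)"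

definition conf_set :: "(real \<Rightarrow> nat set \<Rightarrow> data \<Rightarrow> real) \<Rightarrow> (nat set \<Rightarrow> real)
    \<Rightarrow> data \<Rightarrow> nat set \<Rightarrow> real set" where
  "conf_set T qT x B = {\<beta>0. T \<beta>0 B x \<le> qT B}"

definition conf_union :: "nat \<Rightarrow> nat \<Rightarrow> (real \<Rightarrow> nat set \<Rightarrow> data \<Rightarrow> real) \<Rightarrow> (nat set \<Rightarrow> real)
    \<Rightarrow> (nat set \<Rightarrow> data \<Rightarrow> real) \<Rightarrow> (nat set \<Rightarrow> real) \<Rightarrow> data \<Rightarrow> real set" where
  "conf_union L U T qT S qS x =
     \<Union> {conf_set T qT x B | B. B \<subseteq> {1..L} \<and> card B = U - 1 \<and> S B x \<le> qS B}"

end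

theory Submission
  imports Defs
begin

theorem theorem2:
  fixes M :: "'a measure"
    and n L U :: nat
    and Y D eps :: "'a \<Rightarrow> nat \<Rightarrow> real"
    and Z :: "'a \<Rightarrow> nat \<Rightarrow> nat \<Rightarrow> real"
    and \<pi>s :: "nat \<Rightarrow> real" and \<beta>s :: real
    and \<alpha>1 \<alpha>2 :: real
    and T :: "real \<Rightarrow> nat set \<Rightarrow> data \<Rightarrow> real" and qT :: "nat set \<Rightarrow> real"
    and S :: "nat set \<Rightarrow> data \<Rightarrow> real" and qS :: "nat set \<Rightarrow> real"
  assumes "prob_space M"
    and model: "\<And>\<omega> i. \<omega> \<in> space M \<Longrightarrow> i \<in> {1..n} \<Longrightarrow>
                 Y \<omega> i = (\<Sum>j\<in>{1..L}. Z \<omega> i j * \<pi>s j) + D \<omega> i * \<beta>s + eps \<omega> i"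
    and exog: "\<And>i. i \<in> {1..n} \<Longrightarrow> cond_mean_zero M L (\<lambda>\<omega>. eps \<omega> i) (\<lambda>\<omega>. Z \<omega> i)"
    and U: "1 \<le> U" "U \<le> L - 1"
    and sparse: "card (supp_pi L \<pi>s) < U"
    and alpha: "0 < \<alpha>1" "\<alpha>1 < 1" "0 < \<alpha>2" "\<alpha>2 < 1" "\<alpha>1 + \<alpha>2 < 1"
    and T_meas: "\<And>\<beta>0 B. B \<subseteq> {1..L} \<Longrightarrow>
                   (\<lambda>\<omega>. T \<beta>0 B (Y \<omega>, D \<omega>, Z \<omega>)) \<in> borel_measurable M"
    and S_meas: "\<And>B. B \<subseteq> {1..L} \<Longrightarrow>
                   (\<lambda>\<omega>. S B (Y \<omega>, D \<omega>, Z \<omega>)) \<in> borel_measurable M"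
    and T_valid: "\<And>\<beta>0 B. B \<subseteq> {1..L} \<Longrightarrow> supp_pi L \<pi>s \<subseteq> B \<Longrightarrow> \<beta>s = \<beta>0 \<Longrightarrow>
        measure M {\<omega> \<in> space M. T \<beta>0 B (Y \<omega>, D \<omega>, Z \<omega>) > qT B} \<le> \<alpha>2"
    and S_valid: "\<And>B. B \<subseteq> {1..L} \<Longrightarrow> card ({1..L} - B) \<ge> 2 \<Longrightarrow>
        (\<forall>j \<in> {1..L} - B. \<pi>s j = 0) \<Longrightarrow>
        measure M {\<omega> \<in> space M. S B (Y \<omega>, D \<omega>, Z \<omega>) > qS B} \<le> \<alpha>1"
  shows "measure M {\<omega> \<in> space M. \<beta>s \<in> conf_union L U T qT S qS (Y \<omega>, D \<omega>, Z \<omega>)}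
           \<ge> 1 - (\<alpha>1 + \<alpha>2)"
  proof -
  interpret P: prob_space M by fact
  let ?x = "\<lambda>\<omega>. (Y \<omega>, D \<omega>, Z \<omega>)"
  define Bs where "Bs = supp_pi L \<pi>s"
  have Bs_sub: "Bs \<subseteq> {1..L}" unfolding Bs_def supp_pi_def by auto
  have finBs: "finite Bs" using Bs_sub finite_subset by blast
  have cBs: "card Bs \<le> U - 1" using sparse Bs_def by simp
  have cdiff: "card ({1..L} - Bs) = L - card Bs" using Bs_sub finBs by (simp add: card_Diff_subset)
  have "U - 1 - card Bs \<le> card ({1..L} - Bs)" using cdiff U cBs by simp
  then obtain E where E: "E \<subseteq> {1..L} - Bs" "card E = U - 1 - card Bs" "finite E"
    by (rule obtain_subset_with_card_n)
  define B where "B = Bs \<union> E"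
  have B_sub: "B \<subseteq> {1..L}" using E Bs_sub B_def by auto
  have cB: "card B = U - 1" unfolding B_def using E finBs cBs
    by (subst card_Un_disjoint) auto
  have BsB: "supp_pi L \<pi>s \<subseteq> B" using B_def Bs_def by auto
  have cC: "card ({1..L} - B) \<ge> 2"
    using B_sub cB U by (simp add: card_Diff_subset finite_subset)
  have zero: "\<forall>j \<in> {1..L} - B. \<pi>s j = 0" using BsB unfolding supp_pi_def by auto
  define bS where "bS = {\<omega> \<in> space M. S B (?x \<omega>) > qS B}"
  define bT where "bT = {\<omega> \<in> space M. T \<beta>s B (?x \<omega>) > qT B}"
  have mS: "bS \<in> sets M" unfolding bS_def using S_meas[OF B_sub] by measurable
  have mT: "bT \<in> sets M" unfolding bT_def using T_meas[OF B_sub] by measurable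
  have pS: "P.prob bS \<le> \<alpha>1" unfolding bS_def using S_valid[OF B_sub cC zero] .
  have pT: "P.prob bT \<le> \<alpha>2" unfolding bT_def using T_valid[OF B_sub BsB] by simp
  define G where "G = {\<omega> \<in> space M. \<beta>s \<in> conf_union L U T qT S qS (?x \<omega>)}"
  have G_eq: "G = (\<Union>B' \<in> {B'. B' \<subseteq> {1..L} \<and> card B' = U - 1}.
      {\<omega> \<in> space M. S B' (?x \<omega>) \<le> qS B' \<and> T \<beta>s B' (?x \<omega>) \<le> qT B'})"
    unfolding G_def conf_union_def conf_set_def by auto
  have mG: "G \<in> sets M" unfolding G_eq
  proof (rule sets.finite_UN)
    show "finite {B'. B' \<subseteq> {1..L} \<and> card B' = U - 1}" by simp
    fix B' assume "B' \<in> {B'. B' \<subseteq> {1..L} \<and> card B' = U - 1}"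
    then have h: "B' \<subseteq> {1..L}" by simp
    show "{\<omega> \<in> space M. S B' (?x \<omega>) \<le> qS B' \<and> T \<beta>s B' (?x \<omega>) \<le> qT B'} \<in> sets M"
      using S_meas[OF h] T_meas[OF h] by measurable
  qed
  have sub: "space M - (bS \<union> bT) \<subseteq> G"
    unfolding G_eq bS_def bT_def using B_sub cB by (auto simp: not_less)
  have e1: "P.prob (space M - (bS \<union> bT)) = 1 - P.prob (bS \<union> bT)"
    using mS mT by (simp add: P.prob_compl)
  have e2: "P.prob (bS \<union> bT) \<le> P.prob bS + P.prob bT"
    using mS mT by (rule measure_Un_le)
  have "P.prob (space M - (bS \<union> bT)) \<ge> 1 - (\<alpha>1 + \<alpha>2)" using e1 e2 pS pT by linarith
  moreover have "P.prob (space M - (bS \<union> bT)) \<le> P.prob G"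
    using sub mG by (rule P.finite_measure_mono)
  ultimately show ?thesis unfolding G_def by linarith
qed

end
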